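(* In the restricted cut-and-choose setting described in the context, for every $\alpha\in\mathbb{R}$ and either choice of attack placement (before or after the delegated unitary), the overall acceptance probabilities satisfy $$|p_H-p_D^{\alpha}|\le \sqrt{1-\cos\!\left(\tfrac{\alpha}{2}\right)^{2N}}=\sqrt{1-\left(1-\sin\!\left(\tfrac{\alpha}{2}\right)^2\right)^{N}},$$ where $N=\sum_{n\ge 0} n\,\Omega(n)$ is the expected number of test rounds (assumed finite).
   Context: Restricted cut-and-choose setting. Fix $k\ge 1$ and let $\mathcal{X}=\mathbb{C}^{2^k}$. Let $P(\alpha)=\mathrm{diag}(1,e^{i\alpha})$ and $A_\alpha=\mathbb{1}_2^{\otimes(k-1)}\otimes P(\alpha)$ (phase rotation on the $k$-th qubit). Let $\Omega$ be a probability distribution on $\mathbb{N}=\{0,1,2,\dots\}$ (the number $n$ of test rounds), with finite mean $N=\sum_n n\,\Omega(n)$. For each $n\in\mathbb{N}$ and each round $i\in\{1,\dots,n+1\}$ there is a test (trap) unitary $T_{n,i}\in\mathrm{U}(\mathcal{X})$ and a test input unit vector $|\chi_{n,i}\rangle\in\mathcal{X}$; and for each $n$ a measurement operator $\mu_{k,n}$ on $\mathcal{X}^{\otimes n}$ with $0\le\mu_{k,n}\le \mathbb{1}$ (the "accept" outcome). The output round $\ell$ is uniform on $\{1,\dots,n+1\}$; all rounds $i\ne\ell$ are test rounds, and the round $\ell$ carries the client's computation. The phase attack with parameter $\alpha$ replaces each delegated unitary $T$ by $T^\alpha$, where either $T^\alpha=T A_\alpha$ for all rounds (attack before the unitary)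 or $T^\alpha=A_\alpha T$ for all rounds (attack after the unitary). Define $$p^H_{n,\ell}=\mathrm{Tr}\Big[\mu_{k,n}\bigotimes_{i\ne\ell} T_{n,i}|\chi_{n,i}\rangle\langle\chi_{n,i}|T_{n,i}^\dagger\Big],\qquad p^{D}_{n,\ell}=\mathrm{Tr}\Big[\mu_{k,n}\bigotimes_{i\ne\ell} T^\alpha_{n,i}|\chi_{n,i}\rangle\langle\chi_{n,i}|(T^\alpha_{n,i})^\dagger\Big],$$ (tensor products over $i\in\{1,\dots,n+1\}\setminus\{\ell\}$ in increasing order), and $$p_H=\sum_{n\ge0}\frac{\Omega(n)}{n+1}\sum_{\ell=1}^{n+1}p^H_{n,\ell},\qquad p_D^{\alpha}=\sum_{n\ge0}\frac{\Omega(n)}{n+1}\sum_{\ell=1}^{n+1}p^D_{n,\ell}.$$ *)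

theory Defs
  imports Complex_Main "Jordan_Normal_Form.Matrix"
begin

definition adj :: "complex mat \<Rightarrow> complex mat" where
  "adj A = mat (dim_col A) (dim_row A) (\<lambda>(i,j). cnj (A $$ (j,i)))"

definition is_unitary :: "nat \<Rightarrow> complex mat \<Rightarrow> bool" where
  "is_unitary d U \<longleftrightarrow> U \<in> carrier_mat d d \<and> adj U * U = 1\<^sub>m d \<and> U * adj U = 1\<^sub>m d"

definition unit_cvec :: "nat \<Rightarrow> complex vec \<Rightarrow> bool" where
  "unit_cvec d v \<longleftrightarrow> v \<in> carrier_vec d \<and> (\<Sum>j<d. (cmod (v $ j))^2) = 1"

definition psd :: "nat \<Rightarrow> complex mat \<Rightarrow> bool" where
  "psd d M \<longleftrightarrow> M \<in> carrier_mat d d \<and>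
     (\<forall>v \<in> carrier_vec d. let q = (\<Sum>i<d. \<Sum>j<d. cnj (v $ i) * M $$ (i,j) * v $ j)
                           in Im q = 0 \<and> Re q \<ge> 0)"

text \<open>Kronecker (tensor) product; first factor is the most significant one.\<close>
definition kron :: "complex mat \<Rightarrow> complex mat \<Rightarrow> complex mat" where
  "kron A B = mat (dim_row A * dim_row B) (dim_col A * dim_col B)
     (\<lambda>(i,j). A $$ (i div dim_row B, j div dim_col B) * B $$ (i mod dim_row B, j mod dim_col B))"

definition kron_list :: "complex mat list \<Rightarrow> complex mat" where
  "kron_list As = foldr kron As (1\<^sub>m 1)"

definition ketbra :: "complex vec \<Rightarrow> complex mat" where
  "ketbra v = mat (dim_vec v) (dim_vec v) (\<lambda>(i,j). v $ i * cnj (v $ j))"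

definition mtrace :: "complex mat \<Rightarrow> complex" where
  "mtrace A = (\<Sum>i<dim_row A. A $$ (i,i))"

definition Pgate :: "real \<Rightarrow> complex mat" where
  "Pgate \<alpha> = mat 2 2 (\<lambda>(i,j). if i = j then (if i = 0 then 1 else cis \<alpha>) else 0)"

definition Aphase :: "nat \<Rightarrow> real \<Rightarrow> complex mat" where
  "Aphase k \<alpha> = kron (1\<^sub>m (2^(k-1))) (Pgate \<alpha>)"

definition attacked :: "nat \<Rightarrow> real \<Rightarrow> bool \<Rightarrow> complex mat \<Rightarrow> complex mat" where
  "attacked k \<alpha> before T = (if before then T * Aphase k \<alpha> else Aphase k \<alpha> * T)"

text \<open>Acceptance probability for n test rounds and output round l, for a family
  U n i of (possibly attacked) unitaries; rounds are 1..n+1, round l is skipped.\<close>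
definition accept_prob ::
  "(nat \<Rightarrow> complex mat) \<Rightarrow> (nat \<Rightarrow> nat \<Rightarrow> complex mat) \<Rightarrow> (nat \<Rightarrow> nat \<Rightarrow> complex vec)
     \<Rightarrow> nat \<Rightarrow> nat \<Rightarrow> real" where
  "accept_prob \<mu> U \<chi> n l =
     Re (mtrace (\<mu> n * kron_list (map (\<lambda>i. U n i * ketbra (\<chi> n i) * adj (U n i))
                                     (filter (\<lambda>i. i \<noteq> l) [1..<n+2]))))"

definition overall_prob ::
  "(nat \<Rightarrow> real) \<Rightarrow> (nat \<Rightarrow> complex mat) \<Rightarrow> (nat \<Rightarrow> nat \<Rightarrow> complex mat)
     \<Rightarrow> (nat \<Rightarrow> nat \<Rightarrow> complex vec) \<Rightarrow> real" where
  "overall_prob \<Omega> \<mu> U \<chi> =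
     (\<Sum>n. \<Omega> n / real (n+1) * (\<Sum>l=1..n+1. accept_prob \<mu> U \<chi> n l))"

end

theory Submission
  imports Defs
begin

lemma sum_lessThan_add: "(\<Sum>i<n+b. h i) = (\<Sum>i<(n::nat). h i) + (\<Sum>r<b. (h (n+r)::'a::comm_monoid_add))"
  by (induction b) (simp_all add: add.assoc)
lemma sum_prod_index: "(\<Sum>i<a*b. h i) = (\<Sum>q<(a::nat). \<Sum>r<b. (h (q*b+r)::'a::comm_monoid_add))"
proof (induction a)
  case (Suc a)
  have "(\<Sum>i<Suc a*b. h i) = (\<Sum>i<a*b + b. h i)" by (simp add: add.commute)
  also have "\<dots> = (\<Sum>i<a*b. h i) + (\<Sum>r<b. h (a*b+r))" by (rule sum_lessThan_add) 
  finally show ?case using Suc by simp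
qed simp
lemma sum_div_mod: "(\<Sum>i<a*b. F (i div b) * G (i mod b)) = (\<Sum>q<(a::nat). F q) * (\<Sum>r<b. (G r::'a::comm_semiring_1))"
proof -
  have "(\<Sum>i<a*b. F (i div b) * G (i mod b)) = (\<Sum>q<(a::nat). \<Sum>r<b. F ((q*b+r) div b) * G ((q*b+r) mod b))"
    by (rule sum_prod_index)
  also have "\<dots> = (\<Sum>q<(a::nat). \<Sum>r<b. F q * G r)"
    by (intro sum.cong refl) auto
  finally show ?thesis by (simp add: sum_product)
qed

definition vkron :: "complex vec \<Rightarrow> complex vec \<Rightarrow> complex vec" where
  "vkron u v = vec (dim_vec u * dim_vec v) (\<lambda>i. u$(i div dim_vec v) * v$(i mod dim_vec v))"
definition ipf :: "nat \<Rightarrow> complex vec \<Rightarrow> complex vec \<Rightarrow> complex" where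
  "ipf d u v = (\<Sum>i<d. cnj (u$i) * v$i)"
definition qf :: "nat \<Rightarrow> complex mat \<Rightarrow> (nat \<Rightarrow> complex) \<Rightarrow> (nat \<Rightarrow> complex) \<Rightarrow> complex" where
  "qf d M F G = (\<Sum>i<d. \<Sum>j<d. cnj (F i) * M$$(i,j) * G j)"
definition e1 :: "complex vec" where "e1 = vec 1 (\<lambda>_. 1)"

lemma dim_vkron[simp]: "dim_vec (vkron u v) = dim_vec u * dim_vec v"
  by (simp add: vkron_def)

lemma ketbra_kron: "kron (ketbra u) (ketbra v) = ketbra (vkron u v)"
proof (rule eq_matI)
  fix i j assume i: "i < dim_row (ketbra (vkron u v))" and j: "j < dim_col (ketbra (vkron u v))"
  have i': "i < dim_vec u * dim_vec v" and j': "j < dim_vec u * dim_vec v" using i j by (auto simp: ketbra_def)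
  then have pv: "dim_vec v > 0" by (cases "dim_vec v") auto
  have "i div dim_vec v < dim_vec u" "j div dim_vec v < dim_vec u" using i' j'
    by (auto simp: less_mult_imp_div_less)
  moreover have "i mod dim_vec v < dim_vec v" "j mod dim_vec v < dim_vec v" using pv by auto
  ultimately show "kron (ketbra u) (ketbra v) $$ (i, j) = ketbra (vkron u v) $$ (i, j)"
    using i' j' by (simp add: kron_def ketbra_def vkron_def)
qed (auto simp: kron_def ketbra_def vkron_def)

lemma ketbra_conj:
  assumes U: "U \<in> carrier_mat d d" and x: "x \<in> carrier_vec d"
  shows "U * ketbra x * adj U = ketbra (U *\<^sub>v x)"
proof (rule eq_matI)
  fix i j assume i: "i < dim_row (ketbra (U *\<^sub>v x))" and j: "j < dim_col (ketbra (U *\<^sub>v x))"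
  then have i': "i < d" and j': "j < d" using U by (auto simp: ketbra_def)
  have "(U * ketbra x * adj U) $$ (i,j) = (\<Sum>b<d. (\<Sum>a<d. U$$(i,a) * (x$a * cnj (x$b))) * cnj (U$$(j,b)))"
    using U x i' j' by (simp add: index_mult_mat scalar_prod_def ketbra_def adj_def lessThan_atLeast0)
  also have "\<dots> = (\<Sum>a<d. U$$(i,a) * x$a) * cnj (\<Sum>b<d. U$$(j,b) * x$b)"
    by (simp add: sum_distrib_left sum_distrib_right mult_ac)
  also have "\<dots> = ketbra (U *\<^sub>v x) $$ (i,j)"
    using U x i' j' by (simp add: ketbra_def mult_mat_vec_def scalar_prod_def lessThan_atLeast0)
  finally show "(U * ketbra x * adj U) $$ (i,j) = ketbra (U *\<^sub>v x) $$ (i,j)" .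
qed (use U in \<open>auto simp: ketbra_def adj_def\<close>)

lemma e1_ketbra: "1\<^sub>m 1 = ketbra e1"
  unfolding e1_def ketbra_def by (rule eq_matI) auto

lemma kron_list_ketbra:
  assumes "\<And>i. i \<in> set is \<Longrightarrow> U i \<in> carrier_mat d d \<and> x i \<in> carrier_vec d"
  shows "kron_list (map (\<lambda>i. U i * ketbra (x i) * adj (U i)) is) = ketbra (foldr vkron (map (\<lambda>i. U i *\<^sub>v x i) is) e1)"
  using assms
proof (induction "is")
  case Nil then show ?case using e1_ketbra by (simp add: kron_list_def)
next
  case (Cons a "is")
  have "kron_list (map (\<lambda>i. U i * ketbra (x i) * adj (U i)) (a # is)) =
        kron (U a * ketbra (x a) * adj (U a)) (kron_list (map (\<lambda>i. U i * ketbra (x i) * adj (U i)) is))"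
    by (simp add: kron_list_def)
  also have "\<dots> = kron (ketbra (U a *\<^sub>v x a)) (ketbra (foldr vkron (map (\<lambda>i. U i *\<^sub>v x i) is) e1))"
    using Cons.IH Cons.prems ketbra_conj[of "U a" d "x a"] by simp
  finally show ?case by (simp add: ketbra_kron)
qed

lemma dim_foldr_vkron:
  assumes "\<And>i. i \<in> set is \<Longrightarrow> dim_vec (f i) = d"
  shows "dim_vec (foldr vkron (map f is) e1) = d ^ length is"
  using assms by (induction "is") (auto simp: e1_def)

lemma mtrace_ketbra:
  assumes "M \<in> carrier_mat (dim_vec w) (dim_vec w)"
  shows "mtrace (M * ketbra w) = qf (dim_vec w) M (($) w) (($) w)"
  using assms
  by (auto simp: mtrace_def qf_def ketbra_def index_mult_mat scalar_prod_def lessThan_atLeast0 mult_ac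
       intro!: sum.cong)

lemma ipf_vkron:
  assumes "dim_vec u = a" "dim_vec u' = a" "dim_vec v = b" "dim_vec v' = b"
  shows "ipf (a*b) (vkron u v) (vkron u' v') = ipf a u u' * ipf b v v'"
proof -
  have "ipf (a*b) (vkron u v) (vkron u' v') =
     (\<Sum>i<a*b. (cnj (u$(i div b)) * u'$(i div b)) * (cnj (v$(i mod b)) * v'$(i mod b)))"
    unfolding ipf_def using assms by (intro sum.cong refl) (auto simp: vkron_def mult_ac)
  also have "\<dots> = ipf a u u' * ipf b v v'"
    unfolding ipf_def by (rule sum_div_mod)
  finally show ?thesis .
qed

lemma ipf_foldr:
  assumes "\<And>i. i \<in> set is \<Longrightarrow> dim_vec (f i) = d \<and> dim_vec (g i) = d"
  shows "ipf (d ^ length is) (foldr vkron (map f is) e1) (foldr vkron (map g is) e1)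
     = prod_list (map (\<lambda>i. ipf d (f i) (g i)) is)"
  using assms
proof (induction "is")
  case Nil then show ?case by (simp add: ipf_def e1_def)
next
  case (Cons a "is")
  have "ipf (d * d ^ length is) (vkron (f a) (foldr vkron (map f is) e1)) (vkron (g a) (foldr vkron (map g is) e1))
     = ipf d (f a) (g a) * ipf (d ^ length is) (foldr vkron (map f is) e1) (foldr vkron (map g is) e1)"
    using Cons.prems by (intro ipf_vkron) (auto intro!: dim_foldr_vkron)
  then show ?case using Cons by simp
qed

definition ipn :: "nat \<Rightarrow> (nat \<Rightarrow> complex) \<Rightarrow> (nat \<Rightarrow> complex) \<Rightarrow> complex" where
  "ipn d F G = (\<Sum>i<d. cnj (F i) * G i)"

lemma ipf_ipn: "ipf d u v = ipn d (($) u) (($) v)"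
  by (simp add: ipf_def ipn_def)

lemma qf_bilin:
  "qf d M (\<lambda>i. a * F i + b * G i) (\<lambda>j. c * H j + e * K j) =
    cnj a * c * qf d M F H + cnj a * e * qf d M F K + cnj b * c * qf d M G H + cnj b * e * qf d M G K"
  by (simp add: qf_def sum.distrib sum_distrib_left algebra_simps)

lemma ipn_bilin:
  "ipn d (\<lambda>i. a * F i + b * G i) (\<lambda>j. c * H j + e * K j) =
    cnj a * c * ipn d F H + cnj a * e * ipn d F K + cnj b * c * ipn d G H + cnj b * e * ipn d G K"
  by (simp add: ipn_def sum.distrib sum_distrib_left algebra_simps)

lemma qf_scale: "qf d M (\<lambda>i. a * F i) (\<lambda>j. c * H j) = cnj a * c * qf d M F H"
  by (simp add: qf_def sum_distrib_left algebra_simps)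

lemma ipn_scale: "ipn d (\<lambda>i. a * F i) (\<lambda>j. c * H j) = cnj a * c * ipn d F H"
  by (simp add: ipn_def sum_distrib_left algebra_simps)

lemma ipn_cnj: "ipn d G F = cnj (ipn d F G)"
  by (simp add: ipn_def mult.commute)

lemma psd_nonneg:
  assumes "psd d M"
  shows "Re (qf d M F F) \<ge> 0"
proof -
  have "vec d F \<in> carrier_vec d" by simp
  with assms have "Re (\<Sum>i<d. \<Sum>j<d. cnj (vec d F $ i) * M $$ (i,j) * vec d F $ j) \<ge> 0"
    unfolding psd_def Let_def by blast
  moreover have "(\<Sum>i<d. \<Sum>j<d. cnj (vec d F $ i) * M $$ (i,j) * vec d F $ j) = qf d M F F"
    unfolding qf_def by (intro sum.cong refl) simp
  ultimately show ?thesis by metis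
qed

lemma psd_le:
  assumes "psd d M" "psd d (1\<^sub>m d - M)"
  shows "Re (qf d M F F) \<le> Re (ipn d F F)"
proof -
  have M: "M \<in> carrier_mat d d" using assms(1) by (simp add: psd_def)
  have "Re (qf d (1\<^sub>m d - M) F F) \<ge> 0" by (rule psd_nonneg[OF assms(2)])
  moreover have "qf d (1\<^sub>m d - M) F F = ipn d F F - qf d M F F"
  proof -
    have "qf d (1\<^sub>m d - M) F F = (\<Sum>i<d. \<Sum>j<d. cnj (F i) * ((if i = j then 1 else 0) - M $$ (i,j)) * F j)"
      unfolding qf_def using M by (intro sum.cong refl) auto
    also have "\<dots> = (\<Sum>i<d. \<Sum>j<d. cnj (F i) * (if i = j then 1 else 0) * F j) - qf d M F F"
      by (simp add: qf_def algebra_simps sum_subtractf)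
    also have "(\<Sum>i<d. \<Sum>j<d. cnj (F i) * (if i = j then 1 else 0) * F j) = ipn d F F"
    proof -
      have "\<And>i. cnj (F i) * (if i = j then 1 else 0) * F j = (if i = j then cnj (F i) * F j else 0)" for j
        by simp
      then show ?thesis unfolding ipn_def by simp
    qed
    finally show ?thesis .
  qed
  ultimately show ?thesis by simp
qed

lemma quad_disc:
  fixes D c :: real
  assumes "\<And>p r. (p^2 - r^2) * D \<le> p^2 + r^2 + 2*p*r*c"
  shows "D^2 \<le> 1 - c^2"
proof (cases "D < 1")
  case True
  have "(1-D) * (1 - D^2 - c^2) \<ge> 0"
    using assms[of "-c" "1-D"] by (simp add: power2_eq_square algebra_simps)
  then have "1 - D^2 - c^2 \<ge> 0" using True by (simp add: zero_le_mult_iff)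
  then show ?thesis by simp
next
  case False
  have "1 - D \<ge> 0" using assms[of 1 0] by simp
  with False have D: "D = 1" by simp
  have "-2 * c^2 \<ge> 0" using assms[of "-2" c] D by (simp add: power2_eq_square algebra_simps)
  then have "c = 0" by simp
  with D show ?thesis by simp
qed

lemma key_bound:
  assumes psd1: "psd d M" and psd2: "psd d (1\<^sub>m d - M)"
    and nf: "ipn d F F = 1" and ng: "ipn d G G = 1"
  shows "(Re (qf d M F F) - Re (qf d M G G))^2 \<le> 1 - (cmod (ipn d F G))^2"
proof -
  define z where "z = ipn d F G"
  define \<omega> where "\<omega> = (if z = 0 then 1 else cnj z / of_real (cmod z))"
  have w1: "cnj \<omega> * \<omega> = 1"
  proof (cases "z = 0")
    case False
    then have "cnj \<omega> * \<omega> = (z * cnj z) / of_real (cmod z ^ 2)"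
      by (simp add: \<omega>_def power2_eq_square)
    also have "\<dots> = 1" using False by (simp add: complex_norm_square[symmetric])
    finally show ?thesis .
  qed (simp add: \<omega>_def)
  have wz: "\<omega> * z = of_real (cmod z)"
  proof (cases "z = 0")
    case False
    then have "\<omega> * z = (z * cnj z) / of_real (cmod z)"
      by (simp add: \<omega>_def)
    also have "\<dots> = of_real (cmod z)" using False
      by (simp add: complex_norm_square[symmetric] power2_eq_square)
    finally show ?thesis .
  qed (simp add: \<omega>_def)
  define H where "H = (\<lambda>i. \<omega> * G i)"
  have qH: "qf d M H H = qf d M G G"
    unfolding H_def qf_scale w1 by simp
  have nH: "ipn d H H = 1"
    unfolding H_def ipn_scale w1 ng by simp
  have FH: "ipn d F H = of_real (cmod z)"
  proof -
    have "ipn d F H = \<omega> * z" by (simp add: H_def z_def ipn_def sum_distrib_left mult_ac)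
    then show ?thesis using wz by simp
  qed
  define c where "c = cmod z"
  define D where "D = Re (qf d M F F) - Re (qf d M G G)"
  have "(p^2 - r^2) * D \<le> p^2 + r^2 + 2*p*r*c" for p r :: real
  proof -
    define A where "A = (\<lambda>i. of_real p * F i + of_real r * H i)"
    define B where "B = (\<lambda>i. of_real r * F i + of_real p * H i)"
    have qAB: "qf d M A A - qf d M B B = of_real (p^2 - r^2) * (qf d M F F - qf d M H H)"
      unfolding A_def B_def qf_bilin by (simp add: power2_eq_square algebra_simps)
    have nA: "ipn d A A = of_real (p^2 + r^2) + of_real p * of_real r * (ipn d F H + ipn d H F)"
      unfolding A_def ipn_bilin by (simp add: nf nH power2_eq_square algebra_simps)
    have "Re (ipn d H F) = c" using FH ipn_cnj[of d H F] by (simp add: c_def)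
    then have ReA: "Re (ipn d A A) = p^2 + r^2 + 2*p*r*c" using FH
      by (simp add: nA c_def)
    have "(p^2 - r^2) * D = Re (qf d M A A) - Re (qf d M B B)"
      using arg_cong[OF qAB, of Re] by (simp add: D_def qH)
    also have "\<dots> \<le> Re (qf d M A A)" using psd_nonneg[OF psd1, of B] by simp
    also have "\<dots> \<le> p^2 + r^2 + 2*p*r*c" using psd_le[OF psd1 psd2, of A] ReA by simp
    finally show ?thesis .
  qed
  then have "D^2 \<le> 1 - c^2" by (rule quad_disc)
  then show ?thesis by (simp add: D_def c_def z_def)
qed

lemma cnj_self: "cnj z * z = of_real ((cmod z)^2)" "z * cnj z = of_real ((cmod z)^2)"
  by (metis complex_norm_square mult.commute)+

lemma unit_ipf: assumes "unit_cvec d v" shows "ipf d v v = 1" "v \<in> carrier_vec d"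
proof -
  have "ipf d v v = of_real (\<Sum>j<d. (cmod (v $ j))^2)"
    unfolding ipf_def of_real_sum by (intro sum.cong refl) (simp only: cnj_self)
  then show "ipf d v v = 1" using assms unfolding unit_cvec_def by (metis of_real_1)
  show "v \<in> carrier_vec d" using assms by (simp add: unit_cvec_def)
qed

lemma unitary_ipf:
  assumes U: "is_unitary d T" and x: "x \<in> carrier_vec d" and y: "y \<in> carrier_vec d"
  shows "ipf d (T *\<^sub>v x) (T *\<^sub>v y) = ipf d x y"
proof -
  have T: "T \<in> carrier_mat d d" and TT: "adj T * T = 1\<^sub>m d" using U by (auto simp: is_unitary_def)
  have delta: "(\<Sum>i<d. cnj (T$$(i,a)) * T$$(i,b)) = (if a = b then 1 else 0)" if "a < d" "b < d" for a b
  proof -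
    have "(adj T * T) $$ (a,b) = (\<Sum>i<d. cnj (T$$(i,a)) * T$$(i,b))"
      using T that by (simp add: adj_def index_mult_mat scalar_prod_def lessThan_atLeast0)
    then show ?thesis using TT that by simp
  qed
  have "ipf d (T *\<^sub>v x) (T *\<^sub>v y) = (\<Sum>i<d. (\<Sum>a<d. cnj (T$$(i,a)) * cnj (x$a)) * (\<Sum>b<d. T$$(i,b) * y$b))"
    unfolding ipf_def using T x y
    by (intro sum.cong refl) (simp add: mult_mat_vec_def scalar_prod_def lessThan_atLeast0)
  also have "\<dots> = (\<Sum>i<d. \<Sum>a<d. \<Sum>b<d. cnj (x$a) * y$b * (cnj (T$$(i,a)) * T$$(i,b)))"
    by (simp add: sum_distrib_left sum_distrib_right mult_ac)
  also have "\<dots> = (\<Sum>a<d. \<Sum>i<d. \<Sum>b<d. cnj (x$a) * y$b * (cnj (T$$(i,a)) * T$$(i,b)))"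
    by (rule sum.swap)
  also have "\<dots> = (\<Sum>a<d. \<Sum>b<d. \<Sum>i<d. cnj (x$a) * y$b * (cnj (T$$(i,a)) * T$$(i,b)))"
    by (rule sum.cong[OF refl]) (rule sum.swap)
  also have "\<dots> = (\<Sum>a<d. \<Sum>b<d. cnj (x$a) * y$b * (if a = b then 1 else 0))"
    by (intro sum.cong refl) (simp add: delta flip: sum_distrib_left)
  also have "\<dots> = ipf d x y"
    unfolding ipf_def by (intro sum.cong refl) (simp add: if_distrib cong: if_cong)
  finally show ?thesis .
qed

definition ph :: "real \<Rightarrow> nat \<Rightarrow> complex" where
  "ph \<alpha> i = (if even i then 1 else cis \<alpha>)"

lemma Aphase_carrier: "k \<ge> 1 \<Longrightarrow> Aphase k \<alpha> \<in> carrier_mat (2^k) (2^k)"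
  by (cases k) (auto simp: Aphase_def kron_def Pgate_def)

lemma Aphase_mv:
  assumes k: "k \<ge> 1" and w: "w \<in> carrier_vec (2^k)"
  shows "Aphase k \<alpha> *\<^sub>v w = vec (2^k) (\<lambda>i. ph \<alpha> i * w$i)"
proof (rule eq_vecI)
  have dr: "dim_row (Aphase k \<alpha>) = 2^k" "dim_col (Aphase k \<alpha>) = 2^k"
    using Aphase_carrier[OF k] by auto
  fix i assume i: "i < dim_vec (vec (2^k) (\<lambda>i. ph \<alpha> i * w$i))"
  then have i': "i < 2^k" by simp
  have m: "2^(k-1) * 2 = (2::nat)^k" using k by (cases k) auto
  have ent: "Aphase k \<alpha> $$ (i,j) = (if i = j then ph \<alpha> i else 0)" if j: "j < 2^k" for j
  proof -
    have "i div 2 < 2^(k-1)" "j div 2 < 2^(k-1)" using i' j m by auto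
    then have "Aphase k \<alpha> $$ (i,j) = (if i div 2 = j div 2 then 1 else 0) * Pgate \<alpha> $$ (i mod 2, j mod 2)"
      using i' j m by (simp add: Aphase_def kron_def Pgate_def)
    also have "\<dots> = (if i = j then ph \<alpha> i else 0)"
    proof -
      have "i = j \<longleftrightarrow> i div 2 = j div 2 \<and> i mod 2 = j mod 2"
        by (metis div_mult_mod_eq)
      then show ?thesis by (auto simp: Pgate_def ph_def even_iff_mod_2_eq_zero)
    qed
    finally show ?thesis .
  qed
  have "(Aphase k \<alpha> *\<^sub>v w) $ i = (\<Sum>j<2^k. Aphase k \<alpha> $$ (i,j) * w$j)"
    using i' dr w by (simp add: mult_mat_vec_def scalar_prod_def lessThan_atLeast0 mult.commute)
  also have "\<dots> = (\<Sum>j<2^k. if i = j then ph \<alpha> i * w$j else 0)"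
    by (intro sum.cong refl) (simp add: ent)
  also have "\<dots> = ph \<alpha> i * w$i" using i' by simp
  finally show "(Aphase k \<alpha> *\<^sub>v w) $ i = vec (2^k) (\<lambda>i. ph \<alpha> i * w$i) $ i" using i' by simp
qed (use k w Aphase_carrier[OF k] in auto)

lemma ph_norm: "cnj (ph \<alpha> i) * ph \<alpha> i = 1"
  by (simp add: ph_def cnj_self)

lemma Aphase_ipf_norm:
  assumes k: "k \<ge> 1" and w: "w \<in> carrier_vec (2^k)"
  shows "ipf (2^k) (Aphase k \<alpha> *\<^sub>v w) (Aphase k \<alpha> *\<^sub>v w) = ipf (2^k) w w"
proof -
  have "ipf (2^k) (Aphase k \<alpha> *\<^sub>v w) (Aphase k \<alpha> *\<^sub>v w) = (\<Sum>i<2^k. (cnj (ph \<alpha> i) * ph \<alpha> i) * (cnj (w$i) * w$i))"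
    unfolding Aphase_mv[OF k w] ipf_def by (intro sum.cong refl) (simp add: mult_ac)
  then show ?thesis by (simp add: ph_norm ipf_def)
qed

lemma cos_bound_alg:
  fixes P0 P1 a :: real
  assumes "P0 \<ge> 0" "P1 \<ge> 0" "P0 + P1 = 1"
  shows "(cos (a/2))^2 \<le> (P0 + P1 * cos a)^2 + (P1 * sin a)^2"
proof -
  have c2: "(cos (a/2))^2 = (1 + cos a)/2" using cos_double_cos[of "a/2"] by simp
  have s2: "(sin a)^2 = 1 - (cos a)^2" by (simp add: sin_squared_eq)
  have P1: "P1 = 1 - P0" using assms by simp
  have e: "(P0 + P1 * cos a)^2 + (P1 * sin a)^2 - (1 + cos a)/2 = (1 - cos a) * (2 * (P0 - 1/2)^2)"
    unfolding P1 power_mult_distrib s2 by (simp add: power2_eq_square field_simps)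
  have nn: "(1 - cos a) * (2 * (P0 - 1/2)^2) \<ge> 0" by simp
  show ?thesis using e nn c2 by linarith
qed

lemma cnj_mid: "cnj z * (p * z) = p * of_real ((cmod z)^2)"
proof -
  have "cnj z * (p*z) = p * (cnj z * z)" by (simp add: mult_ac)
  then show ?thesis by (simp only: cnj_self)
qed

lemma Aphase_ipf_bound:
  assumes k: "k \<ge> 1" and w: "w \<in> carrier_vec (2^k)" and n: "ipf (2^k) w w = 1"
  shows "(cos (\<alpha>/2))^2 \<le> (cmod (ipf (2^k) w (Aphase k \<alpha> *\<^sub>v w)))^2"
proof -
  define P0 where "P0 = (\<Sum>i<2^k. if even i then (cmod (w$i))^2 else 0)"
  define P1 where "P1 = (\<Sum>i<2^k. if even i then 0 else (cmod (w$i))^2)"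
  have "ipf (2^k) w (Aphase k \<alpha> *\<^sub>v w) = (\<Sum>i<2^k. ph \<alpha> i * of_real ((cmod (w$i))^2))"
    unfolding Aphase_mv[OF k w] ipf_def
    by (intro sum.cong refl) (simp only: index_vec lessThan_iff cnj_mid)
  also have "\<dots> = (\<Sum>i<2^k. of_real (if even i then (cmod (w$i))^2 else 0) + of_real (if even i then 0 else (cmod (w$i))^2) * cis \<alpha>)"
    by (intro sum.cong refl) (simp add: ph_def)
  also have "\<dots> = of_real P0 + of_real P1 * cis \<alpha>"
    by (simp add: P0_def P1_def sum.distrib sum_distrib_right)
  finally have ip: "ipf (2^k) w (Aphase k \<alpha> *\<^sub>v w) = of_real P0 + of_real P1 * cis \<alpha>" .
  have "P0 + P1 = (\<Sum>i<2^k. (cmod (w$i))^2)"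
    by (simp add: P0_def P1_def flip: sum.distrib) (intro sum.cong refl; simp)
  also have "of_real \<dots> = ipf (2^k) w w"
    unfolding ipf_def of_real_sum by (intro sum.cong refl) (simp only: cnj_self)
  finally have "P0 + P1 = 1" using n by (metis of_real_eq_1_iff)
  moreover have "P0 \<ge> 0" "P1 \<ge> 0" unfolding P0_def P1_def by (auto intro: sum_nonneg)
  ultimately have "(cos (\<alpha>/2))^2 \<le> (P0 + P1 * cos \<alpha>)^2 + (P1 * sin \<alpha>)^2"
    by (intro cos_bound_alg)
  also have "\<dots> = (cmod (of_real P0 + of_real P1 * cis \<alpha>))^2"
    by (simp add: cmod_power2 cis.sel)
  finally show ?thesis using ip by simp
qed

lemma len_filter: "1 \<le> l \<Longrightarrow> l \<le> n+1 \<Longrightarrow> length (filter (\<lambda>i. i \<noteq> l) [1..<n+2]) = n"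
proof -
  assume l: "1 \<le> l" "l \<le> n+1"
  have "length (filter (\<lambda>i. i \<noteq> l) [1..<n+2]) = card (set (filter (\<lambda>i. i \<noteq> l) [1..<n+2]))"
    by (metis distinct_card distinct_filter distinct_upt)
  also have "set (filter (\<lambda>i. i \<noteq> l) [1..<n+2]) = {1..<n+2} - {l}"
    unfolding set_filter set_upt by auto
  also have "card ({1..<n+2} - {l}) = n" using l by (simp add: card_Diff_singleton)
  finally show ?thesis .
qed

lemma accept_eq:
  assumes "\<And>i. i \<in> set is \<Longrightarrow> U n i \<in> carrier_mat d d \<and> \<chi> n i \<in> carrier_vec d"
    and "is = filter (\<lambda>i. i \<noteq> l) [1..<n+2]" and "length is = n"
    and "\<mu> n \<in> carrier_mat (d^n) (d^n)"
  shows "accept_prob \<mu> U \<chi> n l = Re (qf (d^n) (\<mu> n) (($) (foldr vkron (map (\<lambda>i. U n i *\<^sub>v \<chi> n i) is) e1))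
                                  (($) (foldr vkron (map (\<lambda>i. U n i *\<^sub>v \<chi> n i) is) e1)))"
proof -
  define w where "w = foldr vkron (map (\<lambda>i. U n i *\<^sub>v \<chi> n i) is) e1"
  have dw: "dim_vec w = d^n" unfolding w_def using assms(1,3)
    by (subst dim_foldr_vkron[where d=d]) auto
  have "accept_prob \<mu> U \<chi> n l = Re (mtrace (\<mu> n * ketbra w))"
    unfolding accept_prob_def w_def using kron_list_ketbra[of "is" "U n" d "\<chi> n"] assms(1,2) by simp
  also have "\<dots> = Re (qf (d^n) (\<mu> n) (($) w) (($) w))"
    using mtrace_ketbra[of "\<mu> n" w] assms(4) dw by simp
  finally show ?thesis unfolding w_def .
qed

lemma prod_bound:
  assumes "\<And>i. i \<in> set is \<Longrightarrow> c \<le> (cmod (z i))^2" "c \<ge> 0"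
  shows "c ^ length is \<le> (cmod (prod_list (map z is)))^2"
  using assms(1)
proof (induction "is")
  case (Cons a "is")
  have "c * c ^ length is \<le> (cmod (z a))^2 * (cmod (prod_list (map z is)))^2"
    using Cons assms(2) by (intro mult_mono) auto
  then show ?case by (simp add: norm_mult power_mult_distrib)
qed simp

lemma round_facts:
  assumes k: "k \<ge> 1" and U: "is_unitary (2^k) T" and x: "unit_cvec (2^k) x"
  shows "attacked k \<alpha> before T \<in> carrier_mat (2^k) (2^k)"
    "T *\<^sub>v x \<in> carrier_vec (2^k)" "attacked k \<alpha> before T *\<^sub>v x \<in> carrier_vec (2^k)"
    "ipf (2^k) (T *\<^sub>v x) (T *\<^sub>v x) = 1"
    "ipf (2^k) (attacked k \<alpha> before T *\<^sub>v x) (attacked k \<alpha> before T *\<^sub>v x) = 1"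
    "(cos (\<alpha>/2))^2 \<le> (cmod (ipf (2^k) (T *\<^sub>v x) (attacked k \<alpha> before T *\<^sub>v x)))^2"
proof -
  have T: "T \<in> carrier_mat (2^k) (2^k)" using U by (simp add: is_unitary_def)
  have xc: "x \<in> carrier_vec (2^k)" and xn: "ipf (2^k) x x = 1" using unit_ipf[OF x] by auto
  have A: "Aphase k \<alpha> \<in> carrier_mat (2^k) (2^k)" by (rule Aphase_carrier[OF k])
  show "attacked k \<alpha> before T \<in> carrier_mat (2^k) (2^k)" using T A by (auto simp: attacked_def)
  show Tx: "T *\<^sub>v x \<in> carrier_vec (2^k)" using T xc by simp
  have Tn: "ipf (2^k) (T *\<^sub>v x) (T *\<^sub>v x) = 1" using unitary_ipf[OF U xc xc] xn by simp
  then show "ipf (2^k) (T *\<^sub>v x) (T *\<^sub>v x) = 1" .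
  have Ax: "Aphase k \<alpha> *\<^sub>v x \<in> carrier_vec (2^k)" using A xc by simp
  show "attacked k \<alpha> before T *\<^sub>v x \<in> carrier_vec (2^k)" using T A xc by (auto simp: attacked_def)
  show "ipf (2^k) (attacked k \<alpha> before T *\<^sub>v x) (attacked k \<alpha> before T *\<^sub>v x) = 1"
  proof (cases before)
    case True
    then have "attacked k \<alpha> before T *\<^sub>v x = T *\<^sub>v (Aphase k \<alpha> *\<^sub>v x)"
      using T A xc by (simp add: attacked_def assoc_mult_mat_vec)
    then show ?thesis using unitary_ipf[OF U Ax Ax] Aphase_ipf_norm[OF k xc] xn by simp
  next
    case False
    then have "attacked k \<alpha> before T *\<^sub>v x = Aphase k \<alpha> *\<^sub>v (T *\<^sub>v x)"
      using T A xc by (simp add: attacked_def assoc_mult_mat_vec)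
    then show ?thesis using Aphase_ipf_norm[OF k Tx] Tn by simp
  qed
  show "(cos (\<alpha>/2))^2 \<le> (cmod (ipf (2^k) (T *\<^sub>v x) (attacked k \<alpha> before T *\<^sub>v x)))^2"
  proof (cases before)
    case True
    then have "attacked k \<alpha> before T *\<^sub>v x = T *\<^sub>v (Aphase k \<alpha> *\<^sub>v x)"
      using T A xc by (simp add: attacked_def assoc_mult_mat_vec)
    then show ?thesis using unitary_ipf[OF U xc Ax] Aphase_ipf_bound[OF k xc xn] by simp
  next
    case False
    then have "attacked k \<alpha> before T *\<^sub>v x = Aphase k \<alpha> *\<^sub>v (T *\<^sub>v x)"
      using T A xc by (simp add: attacked_def assoc_mult_mat_vec)
    then show ?thesis using Aphase_ipf_bound[OF k Tx Tn] by simp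
  qed
qed

lemma ipf_foldr_one:
  assumes "\<And>i. i \<in> set is \<Longrightarrow> dim_vec (f i) = d \<and> ipf d (f i) (f i) = 1"
  shows "ipn (d ^ length is) (($) (foldr vkron (map f is) e1)) (($) (foldr vkron (map f is) e1)) = 1"
proof -
  have "ipf (d ^ length is) (foldr vkron (map f is) e1) (foldr vkron (map f is) e1) = prod_list (map (\<lambda>i. ipf d (f i) (f i)) is)"
    using assms by (intro ipf_foldr) auto
  also have "\<dots> = 1" using assms by (induction "is") auto
  finally show ?thesis by (simp add: ipf_ipn)
qed

lemma accept_range:
  assumes "psd D M" "psd D (1\<^sub>m D - M)" "ipn D F F = 1"
  shows "0 \<le> Re (qf D M F F)" "Re (qf D M F F) \<le> 1"
  using psd_nonneg[OF assms(1)] psd_le[OF assms(1,2), of F] assms(3) by auto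

lemma per_nl:
  fixes k :: nat and \<alpha> :: real and before :: bool
    and T :: "nat \<Rightarrow> nat \<Rightarrow> complex mat" and \<chi> :: "nat \<Rightarrow> nat \<Rightarrow> complex vec"
    and \<mu> :: "nat \<Rightarrow> complex mat"
  assumes k: "k \<ge> 1"
    and T_unitary: "\<And>n i. 1 \<le> i \<Longrightarrow> i \<le> n + 1 \<Longrightarrow> is_unitary (2^k) (T n i)"
    and chi_unit: "\<And>n i. 1 \<le> i \<Longrightarrow> i \<le> n + 1 \<Longrightarrow> unit_cvec (2^k) (\<chi> n i)"
    and mu_pos: "\<And>n. psd ((2^k)^n) (\<mu> n)"
    and mu_le_one: "\<And>n. psd ((2^k)^n) (1\<^sub>m ((2^k)^n) - \<mu> n)"
    and l: "1 \<le> l" "l \<le> n + 1"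
  shows "\<bar>accept_prob \<mu> T \<chi> n l - accept_prob \<mu> (\<lambda>n i. attacked k \<alpha> before (T n i)) \<chi> n l\<bar>
           \<le> sqrt (1 - ((cos (\<alpha>/2))^2)^n)"
    "0 \<le> accept_prob \<mu> T \<chi> n l" "accept_prob \<mu> T \<chi> n l \<le> 1"
    "0 \<le> accept_prob \<mu> (\<lambda>n i. attacked k \<alpha> before (T n i)) \<chi> n l"
    "accept_prob \<mu> (\<lambda>n i. attacked k \<alpha> before (T n i)) \<chi> n l \<le> 1"
proof -
  define d :: nat where "d = 2^k"
  define "is" where "is = filter (\<lambda>i. i \<noteq> l) [1..<n+2]"
  have len: "length is = n" unfolding is_def using len_filter l by simp
  have rng: "1 \<le> i \<and> i \<le> n+1" if "i \<in> set is" for i using that unfolding is_def set_filter set_upt by auto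
  define U' where "U' = (\<lambda>n i. attacked k \<alpha> before (T n i))"
  define f where "f = (\<lambda>i. T n i *\<^sub>v \<chi> n i)"
  define g where "g = (\<lambda>i. U' n i *\<^sub>v \<chi> n i)"
  have rf: "attacked k \<alpha> before (T n i) \<in> carrier_mat (2^k) (2^k) \<and>
    T n i *\<^sub>v \<chi> n i \<in> carrier_vec (2^k) \<and> attacked k \<alpha> before (T n i) *\<^sub>v \<chi> n i \<in> carrier_vec (2^k) \<and>
    ipf (2^k) (T n i *\<^sub>v \<chi> n i) (T n i *\<^sub>v \<chi> n i) = 1 \<and>
    ipf (2^k) (attacked k \<alpha> before (T n i) *\<^sub>v \<chi> n i) (attacked k \<alpha> before (T n i) *\<^sub>v \<chi> n i) = 1 \<and>
    (cos (\<alpha>/2))^2 \<le> (cmod (ipf (2^k) (T n i *\<^sub>v \<chi> n i) (attacked k \<alpha> before (T n i) *\<^sub>v \<chi> n i)))^2 \<and>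
    T n i \<in> carrier_mat (2^k) (2^k) \<and> \<chi> n i \<in> carrier_vec (2^k)"
    if "i \<in> set is" for i
  proof -
    have "1 \<le> i" "i \<le> n+1" using rng[OF that] by auto
    note U = T_unitary[OF this] and X = chi_unit[OF this]
    show ?thesis using round_facts(1,3,5,6)[where \<alpha>=\<alpha> and before=before, OF k U X] round_facts(2,4)[OF k U X] U X
      by (auto simp: is_unitary_def unit_cvec_def)
  qed
  have M: "\<mu> n \<in> carrier_mat (d^n) (d^n)" using mu_pos[of n] by (simp add: psd_def d_def)
  have aH: "accept_prob \<mu> T \<chi> n l = Re (qf (d^n) (\<mu> n) (($) (foldr vkron (map f is) e1)) (($) (foldr vkron (map f is) e1)))"
    unfolding f_def using rf rng is_def len M
    by (intro accept_eq) (auto simp: d_def is_unitary_def unit_cvec_def)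
  have aD: "accept_prob \<mu> U' \<chi> n l = Re (qf (d^n) (\<mu> n) (($) (foldr vkron (map g is) e1)) (($) (foldr vkron (map g is) e1)))"
    unfolding g_def U'_def using rf rng is_def len M
    by (intro accept_eq) (auto simp: d_def unit_cvec_def)
  have nH: "ipn (d^n) (($) (foldr vkron (map f is) e1)) (($) (foldr vkron (map f is) e1)) = 1"
    using ipf_foldr_one[of "is" f d] rf rng len unfolding f_def d_def by auto
  have nD: "ipn (d^n) (($) (foldr vkron (map g is) e1)) (($) (foldr vkron (map g is) e1)) = 1"
    using ipf_foldr_one[of "is" g d] rf rng len unfolding g_def U'_def d_def by auto
  have ip: "ipn (d^n) (($) (foldr vkron (map f is) e1)) (($) (foldr vkron (map g is) e1))
      = prod_list (map (\<lambda>i. ipf d (f i) (g i)) is)"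
    using ipf_foldr[of "is" f d g] rf rng len unfolding f_def g_def U'_def d_def by (auto simp: ipf_ipn)
  have "((cos (\<alpha>/2))^2)^n \<le> (cmod (prod_list (map (\<lambda>i. ipf d (f i) (g i)) is)))^2"
    using prod_bound[of "is" "(cos (\<alpha>/2))^2" "\<lambda>i. ipf d (f i) (g i)"] rf rng len
    unfolding f_def g_def U'_def d_def by auto
  moreover have "(accept_prob \<mu> T \<chi> n l - accept_prob \<mu> U' \<chi> n l)^2 \<le>
      1 - (cmod (prod_list (map (\<lambda>i. ipf d (f i) (g i)) is)))^2"
    unfolding aH aD ip[symmetric]
    by (rule key_bound) (use mu_pos mu_le_one nH nD in \<open>auto simp: d_def\<close>)
  ultimately have "(accept_prob \<mu> T \<chi> n l - accept_prob \<mu> U' \<chi> n l)^2 \<le> 1 - ((cos (\<alpha>/2))^2)^n"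
    by linarith
  then have "sqrt ((accept_prob \<mu> T \<chi> n l - accept_prob \<mu> U' \<chi> n l)^2) \<le> sqrt (1 - ((cos (\<alpha>/2))^2)^n)"
    using real_sqrt_le_mono by blast
  then show "\<bar>accept_prob \<mu> T \<chi> n l - accept_prob \<mu> (\<lambda>n i. attacked k \<alpha> before (T n i)) \<chi> n l\<bar>
           \<le> sqrt (1 - ((cos (\<alpha>/2))^2)^n)" by (simp add: U'_def)
  show "0 \<le> accept_prob \<mu> T \<chi> n l" "accept_prob \<mu> T \<chi> n l \<le> 1"
    unfolding aH using accept_range[OF mu_pos[of n] mu_le_one[of n] nH[unfolded d_def]] by (auto simp: d_def)
  show "0 \<le> accept_prob \<mu> (\<lambda>n i. attacked k \<alpha> before (T n i)) \<chi> n l"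
       "accept_prob \<mu> (\<lambda>n i. attacked k \<alpha> before (T n i)) \<chi> n l \<le> 1"
    unfolding U'_def[symmetric] aD using accept_range[OF mu_pos[of n] mu_le_one[of n] nD[unfolded d_def]] by (auto simp: d_def)
qed

lemma jensen_part1:
  fixes \<Omega> :: "nat \<Rightarrow> real" and x N :: real
  assumes nn: "\<And>n. \<Omega> n \<ge> 0" and s1: "\<Omega> sums 1" and sN: "(\<lambda>n. real n * \<Omega> n) sums N"
    and x0: "0 \<le> x" and x1: "x \<le> 1"
  shows "x powr N \<le> (\<Sum>n. \<Omega> n * x^n)" "summable (\<lambda>n. \<Omega> n * x^n)"
proof -
  have sm: "summable \<Omega>" using s1 by (rule sums_summable)
  show sx: "summable (\<lambda>n. \<Omega> n * x^n)"
  proof (rule summable_comparison_test'[OF sm])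
    fix n :: nat show "norm (\<Omega> n * x^n) \<le> \<Omega> n"
      using nn[of n] x0 x1 by (simp add: abs_mult mult_left_le power_le_one)
  qed
  show "x powr N \<le> (\<Sum>n. \<Omega> n * x^n)"
  proof (cases "x = 0")
    case True
    then show ?thesis using sx nn by (simp add: suminf_nonneg)
  next
    case False
    then have xp: "x > 0" using x0 by simp
    define L where "L = ln x"
    define E where "E = exp (N * L)"
    have le: "\<Omega> n * (E * (1 + (real n - N) * L)) \<le> \<Omega> n * x^n" for n
    proof -
      have "x^n = exp (real n * L)" using xp by (simp add: L_def exp_of_nat_mult)
      also have "\<dots> = E * exp ((real n - N) * L)" by (simp add: E_def flip: exp_add) (simp add: algebra_simps)
      finally have "x^n = E * exp ((real n - N) * L)" .
      moreover have "1 + (real n - N) * L \<le> exp ((real n - N) * L)" by (rule exp_ge_add_one_self)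
      moreover have "E > 0" by (simp add: E_def)
      ultimately have "E * (1 + (real n - N) * L) \<le> x^n" by simp
      then show ?thesis using nn[of n] by (rule mult_left_mono) 
    qed
    have "(\<lambda>n. E * \<Omega> n + (E * L) * (real n * \<Omega> n) - (E * L * N) * \<Omega> n) sums (E * 1 + (E * L) * N - (E * L * N) * 1)"
      by (intro sums_diff sums_add sums_mult s1 sN)
    then have A: "(\<lambda>n. \<Omega> n * (E * (1 + (real n - N) * L))) sums E"
      by (simp add: algebra_simps)
    have B: "(\<lambda>n. \<Omega> n * x^n) sums (\<Sum>n. \<Omega> n * x^n)" using sx by (rule summable_sums)
    have "E \<le> (\<Sum>n. \<Omega> n * x^n)" using le by (intro sums_le[OF _ A B]) auto
    moreover have "x powr N = E" using xp by (simp add: powr_def E_def L_def mult.commute)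
    ultimately show ?thesis by simp
  qed
qed

lemma jensen:
  fixes \<Omega> :: "nat \<Rightarrow> real" and x N :: real
  assumes nn: "\<And>n. \<Omega> n \<ge> 0" and s1: "\<Omega> sums 1" and sN: "(\<lambda>n. real n * \<Omega> n) sums N"
    and x0: "0 \<le> x" and x1: "x \<le> 1"
  shows "(\<Sum>n. \<Omega> n * sqrt (1 - x^n)) \<le> sqrt (1 - x powr N)"
    "summable (\<lambda>n. \<Omega> n * sqrt (1 - x^n))"
proof -
  note j = jensen_part1[OF assms]
  have sm: "summable \<Omega>" using s1 by (rule sums_summable)
  define g where "g n = 1 - x^n" for n
  have g01: "0 \<le> g n" "g n \<le> 1" for n using x0 x1 by (auto simp: g_def power_le_one)
  have sG: "(\<lambda>n. \<Omega> n * g n) sums (1 - (\<Sum>n. \<Omega> n * x^n))"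
  proof -
    have "(\<lambda>n. \<Omega> n - \<Omega> n * x^n) sums (1 - (\<Sum>n. \<Omega> n * x^n))"
      by (intro sums_diff s1 summable_sums j(2))
    then show ?thesis by (simp add: g_def algebra_simps)
  qed
  define G where "G = 1 - (\<Sum>n. \<Omega> n * x^n)"
  have GN: "G \<le> 1 - x powr N" using j(1) by (simp add: G_def)
  have sG': "(\<lambda>n. \<Omega> n * g n) sums G" using sG by (simp add: G_def)
  have Gnn: "G \<ge> 0" by (rule sums_le[OF _ sums_zero sG']) (simp add: g01 nn)
  show sq: "summable (\<lambda>n. \<Omega> n * sqrt (1 - x^n))"
  proof (rule summable_comparison_test'[OF sm])
    fix n :: nat show "norm (\<Omega> n * sqrt (1 - x^n)) \<le> \<Omega> n"
      using nn[of n] g01[of n] by (simp add: abs_mult g_def mult_left_le)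
  qed
  have "(\<Sum>n. \<Omega> n * sqrt (1 - x^n)) \<le> sqrt G"
  proof (cases "G = 0")
    case True
    have "suminf (\<lambda>n. \<Omega> n * g n) = 0" using True sG' sums_unique by metis
    then have "\<forall>n. \<Omega> n * g n = 0"
      using suminf_eq_zero_iff[of "\<lambda>n. \<Omega> n * g n"] sums_summable[OF sG'] nn g01 by simp
    then have "\<Omega> n * sqrt (1 - x^n) = 0" for n
      by (auto simp: g_def)
    then have "(\<lambda>n. \<Omega> n * sqrt (1 - x^n)) = (\<lambda>n. 0)" by (intro ext) blast
    then show ?thesis using True by simp
  next
    case False
    then have Gp: "G > 0" using Gnn by simp
    have le: "\<Omega> n * sqrt (1 - x^n) \<le> (\<Omega> n * g n + G * \<Omega> n) / (2 * sqrt G)" for n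
    proof -
      have "0 \<le> (sqrt (g n) - sqrt G)^2" by simp
      then have "0 \<le> (sqrt (g n))^2 - 2*sqrt (g n)*sqrt G + (sqrt G)^2" by (simp only: power2_diff)
      then have "2 * sqrt (g n) * sqrt G \<le> g n + G"
        using g01[of n] Gnn by simp
      moreover have "2 * sqrt G > 0" using Gp by simp
      ultimately have "sqrt (g n) \<le> (g n + G) / (2 * sqrt G)" by (simp add: pos_le_divide_eq mult_ac)
      then have "\<Omega> n * sqrt (g n) \<le> \<Omega> n * ((g n + G) / (2 * sqrt G))" using nn[of n] by (rule mult_left_mono)
      then show ?thesis by (simp add: g_def algebra_simps add_divide_distrib)
    qed
    have "(\<lambda>n. (\<Omega> n * g n + G * \<Omega> n) / (2 * sqrt G)) sums ((G + G * 1) / (2 * sqrt G))"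
      by (intro sums_divide sums_add sums_mult s1) (use sG in \<open>simp add: G_def\<close>)
    moreover have "(G + G * 1) / (2 * sqrt G) = sqrt G"
    proof -
      have "(G + G * 1) / (2 * sqrt G) = (sqrt G * sqrt G + sqrt G * sqrt G) / (2 * sqrt G)" using Gnn by simp
      also have "\<dots> = sqrt G" using Gp by (simp add: field_simps)
      finally show ?thesis .
    qed
    ultimately have "(\<lambda>n. (\<Omega> n * g n + G * \<Omega> n) / (2 * sqrt G)) sums sqrt G" by simp
    then show ?thesis using le sq by (intro sums_le[OF _ summable_sums[OF sq]]) auto
  qed
  also have "\<dots> \<le> sqrt (1 - x powr N)" using GN by simp
  finally show "(\<Sum>n. \<Omega> n * sqrt (1 - x^n)) \<le> sqrt (1 - x powr N)" .
qed

theorem mainTheorem1: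
  fixes k :: nat and \<alpha> :: real and before :: bool
    and \<Omega> :: "nat \<Rightarrow> real"
    and T :: "nat \<Rightarrow> nat \<Rightarrow> complex mat" and \<chi> :: "nat \<Rightarrow> nat \<Rightarrow> complex vec"
    and \<mu> :: "nat \<Rightarrow> complex mat"
  assumes k: "k \<ge> 1"
    and Omega_nonneg: "\<And>n. \<Omega> n \<ge> 0"
    and Omega_sums: "\<Omega> sums 1"
    and mean_finite: "summable (\<lambda>n. real n * \<Omega> n)"
    and T_unitary: "\<And>n i. 1 \<le> i \<Longrightarrow> i \<le> n + 1 \<Longrightarrow> is_unitary (2^k) (T n i)"
    and chi_unit: "\<And>n i. 1 \<le> i \<Longrightarrow> i \<le> n + 1 \<Longrightarrow> unit_cvec (2^k) (\<chi> n i)"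
    and mu_pos: "\<And>n. psd ((2^k)^n) (\<mu> n)"
    and mu_le_one: "\<And>n. psd ((2^k)^n) (1\<^sub>m ((2^k)^n) - \<mu> n)"
  shows "\<bar>overall_prob \<Omega> \<mu> T \<chi>
           - overall_prob \<Omega> \<mu> (\<lambda>n i. attacked k \<alpha> before (T n i)) \<chi>\<bar>
         \<le> sqrt (1 - (cos (\<alpha>/2) ^ 2) powr (\<Sum>n. real n * \<Omega> n))"
proof -
  define U' where "U' = (\<lambda>n i. attacked k \<alpha> before (T n i))"
  define x where "x = cos (\<alpha>/2) ^ 2"
  define aH where "aH n l = accept_prob \<mu> T \<chi> n l" for n l
  define aD where "aD n l = accept_prob \<mu> U' \<chi> n l" for n l
  note pn1 = per_nl(1,4,5)[where \<alpha>=\<alpha> and before=before, OF k T_unitary chi_unit mu_pos mu_le_one]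
  note pn2 = per_nl(2,3)[OF k T_unitary chi_unit mu_pos mu_le_one]
  have pH: "0 \<le> aH n l" "aH n l \<le> 1" if "l \<in> {1..n+1}" for n l
    using pn2[where l=l and n=n] that by (auto simp: aH_def)
  have pD: "0 \<le> aD n l" "aD n l \<le> 1" if "l \<in> {1..n+1}" for n l
    using pn1(2,3)[where l=l and n=n] that by (auto simp: aD_def U'_def)
  have pHD: "\<bar>aH n l - aD n l\<bar> \<le> sqrt (1 - x^n)" if "l \<in> {1..n+1}" for n l
    using pn1(1)[where l=l and n=n] that by (auto simp: aH_def aD_def U'_def x_def)
  define tH where "tH n = \<Omega> n / real (n+1) * (\<Sum>l=1..n+1. aH n l)" for n
  define tD where "tD n = \<Omega> n / real (n+1) * (\<Sum>l=1..n+1. aD n l)" for n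
  have sm: "summable \<Omega>" using Omega_sums by (rule sums_summable)
  have bnd: "norm (\<Omega> n / real (n+1) * (\<Sum>l=1..n+1. a l)) \<le> \<Omega> n"
    if "\<And>l. l \<in> {1..n+1} \<Longrightarrow> 0 \<le> a l \<and> a l \<le> 1" for n and a :: "nat \<Rightarrow> real"
  proof -
    have s0: "0 \<le> (\<Sum>l=1..n+1. a l)" using that by (intro sum_nonneg) auto
    have s1: "(\<Sum>l=1..n+1. a l) \<le> real (n+1)"
      using sum_bounded_above[of "{1..n+1}" a 1] that by auto
    have "norm (\<Omega> n / real (n+1) * (\<Sum>l=1..n+1. a l)) = \<Omega> n * ((\<Sum>l=1..n+1. a l) / real (n+1))"
      using s0 Omega_nonneg[of n] by (simp add: abs_mult)
    also have "\<dots> \<le> \<Omega> n * 1"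
      using s1 s0 Omega_nonneg[of n] by (intro mult_left_mono) (auto simp: divide_le_eq_1)
    finally show ?thesis by simp
  qed
  have smH: "summable tH"
    by (rule summable_comparison_test'[OF sm]) (unfold tH_def, rule bnd, use pH in auto)
  have smD: "summable tD"
    by (rule summable_comparison_test'[OF sm]) (unfold tD_def, rule bnd, use pD in auto)
  have diffb: "\<bar>tH n - tD n\<bar> \<le> \<Omega> n * sqrt (1 - x^n)" for n
  proof -
    have "tH n - tD n = \<Omega> n / real (n+1) * (\<Sum>l=1..n+1. aH n l - aD n l)"
      by (simp add: tH_def tD_def sum_subtractf right_diff_distrib)
    moreover have "\<bar>\<Sum>l=1..n+1. aH n l - aD n l\<bar> \<le> real (n+1) * sqrt (1 - x^n)"
    proof -
      have "\<bar>\<Sum>l=1..n+1. aH n l - aD n l\<bar> \<le> (\<Sum>l=1..n+1. \<bar>aH n l - aD n l\<bar>)" by (rule sum_abs)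
      also have "\<dots> \<le> real (card {1..n+1}) * sqrt (1 - x^n)"
        using sum_bounded_above[of "{1..n+1}" "\<lambda>l. \<bar>aH n l - aD n l\<bar>" "sqrt (1 - x^n)"] pHD by auto
      finally show ?thesis by simp
    qed
    ultimately have "\<bar>tH n - tD n\<bar> = \<Omega> n / real (n+1) * \<bar>\<Sum>l=1..n+1. aH n l - aD n l\<bar>"
      using Omega_nonneg[of n] by (simp add: abs_mult)
    also have "\<dots> \<le> \<Omega> n / real (n+1) * (real (n+1) * sqrt (1 - x^n))"
      using \<open>\<bar>\<Sum>l=1..n+1. aH n l - aD n l\<bar> \<le> real (n+1) * sqrt (1 - x^n)\<close> Omega_nonneg[of n]
      by (intro mult_left_mono) auto
    also have "\<dots> = \<Omega> n * sqrt (1 - x^n)" by simp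
    finally show ?thesis .
  qed
  have x01: "0 \<le> x" "x \<le> 1" by (auto simp: x_def abs_square_le_1 abs_cos_le_one)
  have sN: "(\<lambda>n. real n * \<Omega> n) sums (\<Sum>n. real n * \<Omega> n)" using mean_finite by (rule summable_sums)
  note J = jensen[OF Omega_nonneg Omega_sums sN x01]
  have oH: "overall_prob \<Omega> \<mu> T \<chi> = suminf tH"
    unfolding overall_prob_def by (intro arg_cong[where f=suminf] ext) (simp only: tH_def aH_def)
  have oD: "overall_prob \<Omega> \<mu> U' \<chi> = suminf tD"
    unfolding overall_prob_def by (intro arg_cong[where f=suminf] ext) (simp only: tD_def aD_def)
  have "suminf tH - suminf tD = (\<Sum>n. tH n - tD n)" using suminf_diff[OF smH smD] by simp
  have smA: "summable (\<lambda>n. \<bar>tH n - tD n\<bar>)"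
    by (rule summable_comparison_test'[OF J(2)]) (use diffb in simp)
  have "\<bar>suminf tH - suminf tD\<bar> = \<bar>\<Sum>n. tH n - tD n\<bar>" using suminf_diff[OF smH smD] by simp
  also have "\<dots> \<le> (\<Sum>n. \<bar>tH n - tD n\<bar>)" by (rule summable_rabs[OF smA])
  also have "\<dots> \<le> (\<Sum>n. \<Omega> n * sqrt (1 - x^n))" by (rule suminf_le[OF diffb smA J(2)])
  also have "\<dots> \<le> sqrt (1 - x powr (\<Sum>n. real n * \<Omega> n))" by (rule J(1))
  finally show ?thesis using oH oD by (simp add: U'_def x_def)
qed

end
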